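(* Let $n\ge 2k\ge 1$, and let $w$ be a weighted $k$-uniform hypergraph on a vertex set $V$ with $|V|=n$, with $W$-vector $(W_0,\ldots,W_k)$. Fix a sequence $x_1,y_1,\ldots,x_k,y_k$ of $2k$ distinct vertices of $V$, and for $0\le i\le k$ define $\phi_i,\phi_i^*:V^{(k)}\to\mathbb{R}$ by $\phi_i(A)=(-1)^{|A\cap\{y_1,\ldots,y_i\}|}$ if $|A\cap\{x_j,y_j\}|=1$ for all $j=1,\ldots,i$, and $\phi_i(A)=0$ otherwise, and $\phi_i^*=\phi_i/\binom{n-2i}{k-i}$. Then for every $0\le i\le k$, $$W_i=\mathbb{E}_\pi|\langle w_\pi,\phi_i^*\rangle|,$$ where $\pi$ is a uniformly random permutation of $V$.
   Context: $V^{(k)}$ is the family of $k$-subsets of $V$; a weighted $k$-uniform hypergraph on $V$ is a function $w:V^{(k)}\to\mathbb{R}$; $w(S)=\sum_{e\in S^{(k)}}w(e)$; $\langle w,u\rangle=\sum_{e\in V^{(k)}}w(e)u(e)$; $w_\pi(e)=w(\pi^{-1}(e))$. In particular $\phi_0$ is the constant function $1$. $W$-vector (defined recursively on $k$): $W_0=|w(V)|/\binom nk$ (for $k=0$, $w$ is a single real number and $W_0=|w|$). For $k\ge1$ and distinct $x,y\in V$, $w^{xy}:(V\setminus\{x,y\})^{(k-1)}\to\mathbb{R}$ is $w^{xy}(e)=w(e\cup\{x\})-w(e\cup\{y\})$; with $(W^{xy}_0,\ldots,W^{xy}_{k-1})$ its $W$-vector, $W_i=\frac{1}{n(n-1)}\sum_{(x,y):\,x\ne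 y}W^{xy}_{i-1}$ for $1\le i\le k$ (average over ordered pairs of distinct vertices). *)

theory Defs
  imports Complex_Main "HOL-Combinatorics.Permutations"
begin

definition ksubsets :: "'a set \<Rightarrow> nat \<Rightarrow> 'a set set" where
  "ksubsets V k = {e. e \<subseteq> V \<and> card e = k}"

definition wtotal :: "nat \<Rightarrow> 'a set \<Rightarrow> ('a set \<Rightarrow> real) \<Rightarrow> real" where
  "wtotal k V w = (\<Sum>e\<in>ksubsets V k. w e)"

definition hinner :: "nat \<Rightarrow> 'a set \<Rightarrow> ('a set \<Rightarrow> real) \<Rightarrow> ('a set \<Rightarrow> real) \<Rightarrow> real" where
  "hinner k V w u = (\<Sum>e\<in>ksubsets V k. w e * u e)"

definition wxy :: "('a set \<Rightarrow> real) \<Rightarrow> 'a \<Rightarrow> 'a \<Rightarrow> 'a set \<Rightarrow> real" where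
  "wxy w x y = (\<lambda>e. w (e \<union> {x}) - w (e \<union> {y}))"

text \<open>Wvec k V w i is the i-th entry W_i of the W-vector of the weighted
  k-uniform hypergraph w on V (meaningful for i \<le> k).\<close>
fun Wvec :: "nat \<Rightarrow> 'a set \<Rightarrow> ('a set \<Rightarrow> real) \<Rightarrow> nat \<Rightarrow> real" where
  "Wvec k V w 0 = \<bar>wtotal k V w\<bar> / real (card V choose k)"
| "Wvec k V w (Suc i) =
     (if k = 0 then 0 else
       (\<Sum>p\<in>{(x, y). x \<in> V \<and> y \<in> V \<and> x \<noteq> y}.
           Wvec (k - 1) (V - {fst p, snd p}) (wxy w (fst p) (snd p)) i)
       / (real (card V) * (real (card V) - 1)))"

definition wperm :: "('a set \<Rightarrow> real) \<Rightarrow> ('a \<Rightarrow> 'a) \<Rightarrow> 'a set \<Rightarrow> real" where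
  "wperm w \<pi> = (\<lambda>e. w (inv \<pi> ` e))"

definition phi :: "(nat \<Rightarrow> 'a) \<Rightarrow> (nat \<Rightarrow> 'a) \<Rightarrow> nat \<Rightarrow> 'a set \<Rightarrow> real" where
  "phi x y i A = (if \<forall>j\<in>{1..i}. card (A \<inter> {x j, y j}) = 1
                  then (-1) ^ card (A \<inter> y ` {1..i}) else 0)"

definition phi_star :: "nat \<Rightarrow> nat \<Rightarrow> (nat \<Rightarrow> 'a) \<Rightarrow> (nat \<Rightarrow> 'a) \<Rightarrow> nat \<Rightarrow> 'a set \<Rightarrow> real" where
  "phi_star n k x y i A = phi x y i A / real ((n - 2 * i) choose (k - i))"

end

theory Submission imports Defs begin

abbreviation offd :: "'a set \<Rightarrow> ('a \<times> 'a) set" where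
  "offd V \<equiv> {(x, y). x \<in> V \<and> y \<in> V \<and> x \<noteq> y}"

fun D :: "('a \<times> 'a) list \<Rightarrow> ('a set \<Rightarrow> real) \<Rightarrow> 'a set \<Rightarrow> real" where
  "D [] u = u"
| "D (p # ps) u = D ps (wxy u (fst p) (snd p))"

definition flat :: "('a \<times> 'a) list \<Rightarrow> 'a list" where
  "flat ps = map fst ps @ map snd ps"

definition good :: "'a set \<Rightarrow> ('a \<times> 'a) list \<Rightarrow> bool" where
  "good V ps \<longleftrightarrow> distinct (flat ps) \<and> set (flat ps) \<subseteq> V"

definition Sq :: "'a set \<Rightarrow> nat \<Rightarrow> ('a \<times> 'a) list set" where
  "Sq V i = {ps. length ps = i \<and> good V ps}"

fun cc :: "nat \<Rightarrow> nat \<Rightarrow> nat" where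
  "cc n 0 = 1"
| "cc n (Suc i) = n * (n - 1) * cc (n - 2) i"

definition Phi :: "('a \<times> 'a) list \<Rightarrow> 'a set \<Rightarrow> real" where
  "Phi ps A = (if \<forall>p\<in>set ps. card (A \<inter> {fst p, snd p}) = 1
               then (-1) ^ card (A \<inter> snd ` set ps) else 0)"

lemma good_Cons: "good V ((a,b) # ps) \<longleftrightarrow> (a, b) \<in> offd V \<and> good (V - {a, b}) ps"
  unfolding good_def flat_def by auto

lemma Sq_Suc: "Sq V (Suc i) = (\<Union>p\<in>offd V. Cons p ` Sq (V - {fst p, snd p}) i)"
proof (intro set_eqI iffI)
  fix ps assume "ps \<in> Sq V (Suc i)"
  then obtain a b qs where "ps = (a,b) # qs" "length qs = i" "good V ((a,b)#qs)"
    unfolding Sq_def by (cases ps) auto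
  then show "ps \<in> (\<Union>p\<in>offd V. Cons p ` Sq (V - {fst p, snd p}) i)"
    unfolding Sq_def good_Cons by auto
next
  fix ps assume "ps \<in> (\<Union>p\<in>offd V. Cons p ` Sq (V - {fst p, snd p}) i)"
  then show "ps \<in> Sq V (Suc i)" unfolding Sq_def using good_Cons by fastforce
qed

lemma finite_Sq: "finite V \<Longrightarrow> finite (Sq V i)"
proof -
  assume f: "finite V"
  have "Sq V i \<subseteq> {xs. set xs \<subseteq> V \<times> V \<and> length xs = i}"
    unfolding Sq_def good_def flat_def by force
  moreover have "finite {xs. set xs \<subseteq> V \<times> V \<and> length xs = i}"
    using f by (intro finite_lists_length_eq) auto
  ultimately show ?thesis by (rule finite_subset)
qed

lemma finite_offd: "finite V \<Longrightarrow> finite (offd V)"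
  by (rule finite_subset[of _ "V \<times> V"]) auto

lemma sum_Sq_Suc:
  assumes "finite V"
  shows "sum f (Sq V (Suc i)) = (\<Sum>p\<in>offd V. \<Sum>ps\<in>Sq (V - {fst p, snd p}) i. f (p # ps))"
proof -
  have "sum f (Sq V (Suc i)) = (\<Sum>p\<in>offd V. sum f (Cons p ` Sq (V - {fst p, snd p}) i))"
    unfolding Sq_Suc
    by (rule sum.UNION_disjoint) (auto simp: assms finite_offd finite_Sq)
  also have "\<dots> = (\<Sum>p\<in>offd V. \<Sum>ps\<in>Sq (V - {fst p, snd p}) i. f (p # ps))"
    by (rule sum.cong[OF refl], subst sum.reindex) (auto simp: inj_on_def)
  finally show ?thesis .
qed

lemma card_offd: "finite V \<Longrightarrow> card (offd V) = card V * (card V - 1)"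
proof -
  assume f: "finite V"
  have "offd V = V \<times> V - (\<lambda>x. (x,x)) ` V" by auto
  then have "card (offd V) = card (V \<times> V) - card ((\<lambda>x. (x,x)) ` V)"
    using f by (simp add: card_Diff_subset finite_imageI image_subset_iff)
  also have "card ((\<lambda>x. (x,x)) ` V) = card V" by (rule card_image) (auto simp: inj_on_def)
  finally show ?thesis by (simp add: card_cartesian_product diff_mult_distrib2)
qed

lemma card_Sq: "finite V \<Longrightarrow> card (Sq V i) = cc (card V) i"
proof (induction i arbitrary: V)
  case 0
  have "Sq V 0 = {[]}" unfolding Sq_def good_def flat_def by auto
  then show ?case by simp
next
  case (Suc i)
  have "card (Sq V (Suc i)) = (\<Sum>p\<in>offd V. \<Sum>ps\<in>Sq (V - {fst p, snd p}) i. 1)"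
    using sum_Sq_Suc[OF Suc.prems, of "\<lambda>_. 1::nat"] by simp
  also have "\<dots> = (\<Sum>p\<in>offd V. cc (card V - 2) i)"
  proof (rule sum.cong[OF refl])
    fix p assume p: "p \<in> offd V"
    then have "card (V - {fst p, snd p}) = card V - 2"
      using Suc.prems by (auto simp: card_Diff_subset)
    then show "(\<Sum>ps\<in>Sq (V - {fst p, snd p}) i. 1) = cc (card V - 2) i"
      using Suc.IH[of "V - {fst p, snd p}"] Suc.prems by simp
  qed
  also have "\<dots> = card V * (card V - 1) * cc (card V - 2) i"
    using card_offd[OF Suc.prems] by simp
  finally show ?case by simp
qed


definition pset :: "('a \<times> 'a) list \<Rightarrow> 'a set" where
  "pset ps = set (flat ps)"

lemma pset_Cons: "pset (p # ps) = {fst p, snd p} \<union> pset ps"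
  unfolding pset_def flat_def by auto

lemma lemmaA:
  assumes "finite V" "i \<le> k"
  shows "Wvec k V w i * real (cc (card V) i) =
    (\<Sum>ps\<in>Sq V i. \<bar>wtotal (k - i) (V - pset ps) (D ps w)\<bar> / real ((card V - 2 * i) choose (k - i)))"
  using assms
proof (induction i arbitrary: k V w)
  case 0
  have "Sq V 0 = {[]}" unfolding Sq_def good_def flat_def by auto
  then show ?case by (simp add: pset_def flat_def)
next
  case (Suc i)
  let ?n = "card V"
  have k0: "k \<noteq> 0" using Suc.prems by auto
  let ?g = "\<lambda>p. Wvec (k - 1) (V - {fst p, snd p}) (wxy w (fst p) (snd p)) i"
  show ?case
  proof (cases "?n < 2")
    case True
    then have "offd V = {}"
      using card_offd[OF Suc.prems(1)] finite_offd[OF Suc.prems(1)] by auto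
    then have "Sq V (Suc i) = {}" unfolding Sq_Suc by (simp only: UN_empty)
    then show ?thesis using True by simp
  next
    case False
    then have nz: "real ?n * (real ?n - 1) \<noteq> 0" by auto
    have "Wvec k V w (Suc i) * real (cc ?n (Suc i)) =
       (\<Sum>p\<in>offd V. ?g p) / (real ?n * (real ?n - 1)) * (real ?n * (real ?n - 1)) * real (cc (?n - 2) i)"
      using k0 False by (simp add: of_nat_diff)
    also have "\<dots> = (\<Sum>p\<in>offd V. ?g p * real (cc (?n - 2) i))"
      using nz by (simp add: sum_distrib_right[symmetric])
    also have "\<dots> = (\<Sum>p\<in>offd V. \<Sum>ps\<in>Sq (V - {fst p, snd p}) i.
        \<bar>wtotal (k - Suc i) (V - pset (p # ps)) (D (p # ps) w)\<bar> / real ((?n - 2 * Suc i) choose (k - Suc i)))"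
    proof (rule sum.cong[OF refl])
      fix p assume p: "p \<in> offd V"
      then have c: "card (V - {fst p, snd p}) = ?n - 2"
        using Suc.prems by (auto simp: card_Diff_subset)
      have "?g p * real (cc (?n - 2) i) = (\<Sum>ps\<in>Sq (V - {fst p, snd p}) i.
          \<bar>wtotal (k - 1 - i) (V - {fst p, snd p} - pset ps) (D ps (wxy w (fst p) (snd p)))\<bar> /
          real ((card (V - {fst p, snd p}) - 2 * i) choose (k - 1 - i)))"
        using Suc.IH[of "V - {fst p, snd p}" "k - 1" "wxy w (fst p) (snd p)"] Suc.prems c by simp
      also have "\<dots> = (\<Sum>ps\<in>Sq (V - {fst p, snd p}) i.
        \<bar>wtotal (k - Suc i) (V - pset (p # ps)) (D (p # ps) w)\<bar> / real ((?n - 2 * Suc i) choose (k - Suc i)))"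
      proof (rule sum.cong[OF refl])
        fix ps
        have "V - {fst p, snd p} - pset ps = V - pset (p # ps)" by (auto simp: pset_Cons)
        moreover have "card V - 2 - 2 * i = card V - 2 * Suc i" by simp
        ultimately show "\<bar>wtotal (k - 1 - i) (V - {fst p, snd p} - pset ps) (D ps (wxy w (fst p) (snd p)))\<bar> /
          real ((card (V - {fst p, snd p}) - 2 * i) choose (k - 1 - i)) =
          \<bar>wtotal (k - Suc i) (V - pset (p # ps)) (D (p # ps) w)\<bar> / real ((?n - 2 * Suc i) choose (k - Suc i))"
          by (simp only: c D.simps diff_Suc_eq_diff_pred)
      qed
      finally show "?g p * real (cc (?n - 2) i) = \<dots>" .
    qed
    also have "\<dots> = (\<Sum>ps\<in>Sq V (Suc i). \<bar>wtotal (k - Suc i) (V - pset ps) (D ps w)\<bar> /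
         real ((?n - 2 * Suc i) choose (k - Suc i)))"
      by (rule sum_Sq_Suc[OF Suc.prems(1), symmetric])
    finally show ?thesis .
  qed
qed


lemma Phi_Nil: "Phi [] A = 1" unfolding Phi_def by simp

lemma Phi_Cons:
  assumes "distinct (flat ((a,b) # ps))"
  shows "Phi ((a,b) # ps) A = (if a \<in> A \<and> b \<notin> A then Phi ps A
     else if b \<in> A \<and> a \<notin> A then - Phi ps A else 0)"
proof -
  from assms have ab: "a \<noteq> b" and bn: "b \<notin> snd ` set ps" unfolding flat_def by auto
  have c1: "card (A \<inter> {a, b}) = 1 \<longleftrightarrow> (a \<in> A \<and> b \<notin> A) \<or> (b \<in> A \<and> a \<notin> A)"
  proof -
    have "A \<inter> {a,b} = (if a \<in> A then {a} else {}) \<union> (if b \<in> A then {b} else {})" by auto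
    then show ?thesis using ab by (auto simp: card_insert_if)
  qed
  have c2: "card (A \<inter> snd ` set ((a,b) # ps)) = card (A \<inter> snd ` set ps) + (if b \<in> A then 1 else 0)"
  proof -
    have "A \<inter> snd ` set ((a,b) # ps) = (if b \<in> A then insert b (A \<inter> snd ` set ps) else A \<inter> snd ` set ps)"
      by auto
    then show ?thesis using bn by simp
  qed
  show ?thesis unfolding Phi_def using c1 c2 by auto
qed

lemma Phi_insert: "a \<notin> pset ps \<Longrightarrow> Phi ps (insert a B) = Phi ps B"
proof -
  assume a: "a \<notin> pset ps"
  have 1: "\<And>p. p \<in> set ps \<Longrightarrow> insert a B \<inter> {fst p, snd p} = B \<inter> {fst p, snd p}"
    using a unfolding pset_def flat_def by force
  have 2: "insert a B \<inter> snd ` set ps = B \<inter> snd ` set ps"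
    using a unfolding pset_def flat_def by force
  show ?thesis unfolding Phi_def using 1 2 by simp
qed

lemma ksub_split:
  assumes "finite V" "a \<in> V" "b \<in> V" "a \<noteq> b" "k \<ge> 1"
  shows "{A \<in> ksubsets V k. a \<in> A \<and> b \<notin> A} = insert a ` ksubsets (V - {a, b}) (k - 1)"
proof (intro set_eqI iffI)
  fix A assume A: "A \<in> {A \<in> ksubsets V k. a \<in> A \<and> b \<notin> A}"
  then have "finite A" using assms(1) unfolding ksubsets_def by (auto intro: finite_subset)
  then have "A - {a} \<in> ksubsets (V - {a, b}) (k - 1)" using A unfolding ksubsets_def by auto
  moreover have "A = insert a (A - {a})" using A by auto
  ultimately show "A \<in> insert a ` ksubsets (V - {a, b}) (k - 1)" by blast
next
  fix A assume "A \<in> insert a ` ksubsets (V - {a, b}) (k - 1)"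
  then obtain B where B: "A = insert a B" "B \<subseteq> V - {a,b}" "card B = k - 1"
    unfolding ksubsets_def by auto
  then have "finite B" using assms(1) by (auto intro: finite_subset)
  moreover have "a \<notin> B" using B by auto
  ultimately have "card A = k" using B assms by simp
  then show "A \<in> {A \<in> ksubsets V k. a \<in> A \<and> b \<notin> A}"
    using B assms unfolding ksubsets_def by auto
qed

lemma hinner_Phi:
  assumes "finite V" "good V ps" "length ps \<le> k"
  shows "hinner k V u (Phi ps) = wtotal (k - length ps) (V - pset ps) (D ps u)"
  using assms
proof (induction ps arbitrary: V k u)
  case Nil
  then show ?case by (simp add: hinner_def wtotal_def Phi_Nil pset_def flat_def)
next
  case (Cons p ps)
  obtain a b where p: "p = (a, b)" by (cases p)
  have g: "(a, b) \<in> offd V" "good (V - {a,b}) ps" using Cons.prems(2) unfolding p good_Cons by auto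
  have dist: "distinct (flat ((a,b) # ps))" using Cons.prems(2) p good_def by auto
  have k1: "k \<ge> 1" using Cons.prems(3) by simp
  have ap: "a \<notin> pset ps" "b \<notin> pset ps" using g(2) unfolding good_def pset_def by auto
  have fin: "finite (ksubsets V k)"
  proof (rule finite_subset)
    show "ksubsets V k \<subseteq> Pow V" unfolding ksubsets_def by blast
    show "finite (Pow V)" using Cons.prems(1) by simp
  qed
  have "hinner k V u (Phi ((a,b) # ps)) =
    (\<Sum>A\<in>ksubsets V k. (if a \<in> A \<and> b \<notin> A then u A * Phi ps A else 0)) -
    (\<Sum>A\<in>ksubsets V k. (if b \<in> A \<and> a \<notin> A then u A * Phi ps A else 0))"
    unfolding hinner_def sum_subtractf[symmetric]
    by (rule sum.cong[OF refl]) (simp add: Phi_Cons[OF dist])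
  also have "\<dots> = (\<Sum>A\<in>{A \<in> ksubsets V k. a \<in> A \<and> b \<notin> A}. u A * Phi ps A) -
      (\<Sum>A\<in>{A \<in> ksubsets V k. b \<in> A \<and> a \<notin> A}. u A * Phi ps A)"
    using fin by (simp add: sum.inter_filter)
  also have "{A \<in> ksubsets V k. a \<in> A \<and> b \<notin> A} = insert a ` ksubsets (V - {a, b}) (k - 1)"
    using ksub_split[OF Cons.prems(1) _ _ _ k1, of a b] g by auto
  also have "{A \<in> ksubsets V k. b \<in> A \<and> a \<notin> A} = insert b ` ksubsets (V - {a, b}) (k - 1)"
    using ksub_split[OF Cons.prems(1) _ _ _ k1, of b a] g by (auto simp: insert_commute)
  also have "(\<Sum>A\<in>insert a ` ksubsets (V - {a, b}) (k - 1). u A * Phi ps A) =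
     (\<Sum>B\<in>ksubsets (V - {a, b}) (k - 1). u (B \<union> {a}) * Phi ps B)"
    by (subst sum.reindex) (auto simp: inj_on_def ksubsets_def Phi_insert[OF ap(1)])
  also have "(\<Sum>A\<in>insert b ` ksubsets (V - {a, b}) (k - 1). u A * Phi ps A) =
     (\<Sum>B\<in>ksubsets (V - {a, b}) (k - 1). u (B \<union> {b}) * Phi ps B)"
    by (subst sum.reindex) (auto simp: inj_on_def ksubsets_def Phi_insert[OF ap(2)])
  also have "(\<Sum>B\<in>ksubsets (V - {a, b}) (k - 1). u (B \<union> {a}) * Phi ps B) -
      (\<Sum>B\<in>ksubsets (V - {a, b}) (k - 1). u (B \<union> {b}) * Phi ps B) =
      hinner (k - 1) (V - {a, b}) (wxy u a b) (Phi ps)"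
    unfolding hinner_def wxy_def sum_subtractf[symmetric] by (simp add: algebra_simps)
  also have "\<dots> = wtotal (k - 1 - length ps) (V - {a, b} - pset ps) (D ps (wxy u a b))"
    using Cons.IH[of "V - {a,b}" "k - 1" "wxy u a b"] Cons.prems g by simp
  also have "\<dots> = wtotal (k - length (p # ps)) (V - pset (p # ps)) (D (p # ps) u)"
  proof -
    have "V - {a, b} - pset ps = V - pset (p # ps)" by (auto simp: pset_Cons p)
    then show ?thesis by (simp add: p)
  qed
  finally show ?case by (simp add: p)
qed


lemma hinner_perm:
  assumes "\<pi> permutes V"
  shows "hinner k V (wperm w \<pi>) f = hinner k V w (\<lambda>B. f (\<pi> ` B))"
proof -
  have inj: "inj \<pi>" and injv: "inj (inv \<pi>)"
    using assms permutes_inj permutes_inv by blast+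
  have img: "\<pi> ` V = V" "inv \<pi> ` V = V"
    using assms permutes_image permutes_inv by blast+
  show ?thesis unfolding hinner_def wperm_def
  proof (rule sum.reindex_bij_witness[where i="image \<pi>" and j="image (inv \<pi>)"])
    fix A assume A: "A \<in> ksubsets V k"
    show e: "\<pi> ` inv \<pi> ` A = A" using assms by (simp add: image_comp permutes_inverses(1) o_def)
    have "inv \<pi> ` A \<subseteq> V" using A img(2) unfolding ksubsets_def by blast
    then show "inv \<pi> ` A \<in> ksubsets V k"
      using A injv unfolding ksubsets_def by (auto simp: card_image inj_on_subset)
    show "w (inv \<pi> ` A) * f (\<pi> ` inv \<pi> ` A) = w (inv \<pi> ` A) * f A"
      using e by simp
  next
    fix B assume B: "B \<in> ksubsets V k"
    show "inv \<pi> ` \<pi> ` B = B" using assms by (simp add: image_comp permutes_inverses(2) o_def)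
    have "\<pi> ` B \<subseteq> V" using B img(1) unfolding ksubsets_def by blast
    then show "\<pi> ` B \<in> ksubsets V k"
      using B inj unfolding ksubsets_def by (auto simp: card_image inj_on_subset)
  qed
qed

lemma card_img_inter:
  assumes "bij \<pi>"
  shows "card (\<pi> ` B \<inter> C) = card (B \<inter> inv \<pi> ` C)"
proof -
  have "\<pi> ` B \<inter> C = \<pi> ` (B \<inter> inv \<pi> ` C)"
    using assms by (auto simp: bij_inv_eq_iff image_iff) (metis bij_inv_eq_iff)
  moreover have "inj \<pi>" using assms bij_is_inj by blast
  ultimately show ?thesis by (simp add: card_image inj_on_subset)
qed

definition tg :: "(nat \<Rightarrow> 'a) \<Rightarrow> (nat \<Rightarrow> 'a) \<Rightarrow> nat \<Rightarrow> ('a \<times> 'a) list" where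
  "tg x y i = map (\<lambda>j. (x j, y j)) [1..<Suc i]"

definition qs :: "('a \<Rightarrow> 'a) \<Rightarrow> ('a \<times> 'a) list \<Rightarrow> ('a \<times> 'a) list" where
  "qs \<pi> t = map (\<lambda>(u, v). (inv \<pi> u, inv \<pi> v)) t"

lemma phi_perm:
  assumes "bij \<pi>"
  shows "phi x y i (\<pi> ` B) = Phi (qs \<pi> (tg x y i)) B"
proof -
  have s1: "set (qs \<pi> (tg x y i)) = (\<lambda>j. (inv \<pi> (x j), inv \<pi> (y j))) ` {1..i}"
    unfolding qs_def tg_def by auto
  have s2: "snd ` set (qs \<pi> (tg x y i)) = inv \<pi> ` y ` {1..i}"
    unfolding s1 by (simp add: image_image)
  have c1: "\<And>j. card (\<pi> ` B \<inter> {x j, y j}) = card (B \<inter> {inv \<pi> (x j), inv \<pi> (y j)})"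
    using card_img_inter[OF assms] by simp
  have c2: "card (\<pi> ` B \<inter> y ` {1..i}) = card (B \<inter> inv \<pi> ` y ` {1..i})"
    using card_img_inter[OF assms] by simp
  show ?thesis unfolding phi_def Phi_def s2 c2 unfolding s1 using c1 by auto
qed

lemma qs_Sq:
  assumes "\<pi> permutes V" "good V t"
  shows "qs \<pi> t \<in> Sq V (length t)"
proof -
  have f: "flat (qs \<pi> t) = map (inv \<pi>) (flat t)"
    unfolding flat_def qs_def by (induction t) auto
  have "inj (inv \<pi>)" using assms permutes_inj permutes_inv by blast
  moreover have "inv \<pi> ` V = V" using assms permutes_image permutes_inv by blast
  moreover have "length (qs \<pi> t) = length t" by (simp add: qs_def)
  ultimately show ?thesis using assms(2) unfolding Sq_def mem_Collect_eq good_def f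
    by (auto simp: distinct_map inj_on_subset)
qed

lemma good_tg:
  assumes "\<forall>j\<in>{1..k}. x j \<in> V \<and> y j \<in> V"
    and "inj_on x {1..k}" and "inj_on y {1..k}"
    and "\<forall>j\<in>{1..k}. \<forall>l\<in>{1..k}. x j \<noteq> y l"
    and "i \<le> k"
  shows "good V (tg x y i)"
proof -
  have f: "flat (tg x y i) = map x [1..<Suc i] @ map y [1..<Suc i]"
    unfolding flat_def tg_def by (simp add: comp_def)
  have st: "set [1..<Suc i] = {1..i}" by auto
  have sub: "{1..i} \<subseteq> {1..k}" using assms(5) by auto
  have d1: "distinct (map x [1..<Suc i])" unfolding distinct_map st
    using inj_on_subset[OF assms(2) sub] by simp
  have d2: "distinct (map y [1..<Suc i])" unfolding distinct_map st
    using inj_on_subset[OF assms(3) sub] by simp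
  have d3: "set (map x [1..<Suc i]) \<inter> set (map y [1..<Suc i]) = {}"
    unfolding set_map st using assms(4) sub by blast
  have d4: "set (map x [1..<Suc i] @ map y [1..<Suc i]) \<subseteq> V"
    unfolding set_append set_map st using assms(1) sub by blast
  show ?thesis unfolding good_def f using d1 d2 d3 d4 by simp
qed


lemma exists_perm:
  assumes "length cs = length ds" "distinct cs" "distinct ds" "set cs \<subseteq> V" "set ds \<subseteq> V"
  shows "\<exists>\<sigma>. \<sigma> permutes V \<and> map \<sigma> cs = ds"
  using assms
proof (induction cs ds rule: list_induct2)
  case Nil
  have "id permutes V" by (rule permutes_id)
  moreover have "map id [] = []" by simp
  ultimately show ?case by (intro exI[of _ id] conjI)
next
  case (Cons c cs d ds)
  then obtain \<sigma> where s: "\<sigma> permutes V" "map \<sigma> cs = ds" by auto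
  have cV: "\<sigma> c \<in> V" using s(1) Cons.prems permutes_in_image by fastforce
  let ?s = "Transposition.transpose (\<sigma> c) d \<circ> \<sigma>"
  have "?s permutes V" using s(1) cV Cons.prems by (intro permutes_compose permutes_swap_id) auto
  moreover have "map ?s cs = ds"
  proof -
    have "\<forall>e\<in>set cs. ?s e = \<sigma> e"
    proof
      fix e assume e: "e \<in> set cs"
      have "\<sigma> e \<noteq> \<sigma> c" using e Cons.prems permutes_inj[OF s(1)] by (auto dest: injD)
      moreover have "\<sigma> e \<noteq> d" using e s(2) Cons.prems by auto
      ultimately show "?s e = \<sigma> e" by (simp add: transpose_apply_other)
    qed
    then show ?thesis using s(2) by (metis map_eq_conv)
  qed
  moreover have "?s c = d" by simp
  ultimately show ?case by auto
qed

lemma map_fix_iff: "map \<tau> cs = cs \<longleftrightarrow> (\<forall>c\<in>set cs. \<tau> c = c)"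
  by (induction cs) auto

lemma fix_perm:
  assumes "set cs \<subseteq> V"
  shows "{\<tau>. \<tau> permutes V \<and> map \<tau> cs = cs} = {\<tau>. \<tau> permutes (V - set cs)}"
proof (intro set_eqI iffI)
  fix \<tau> assume "\<tau> \<in> {\<tau>. \<tau> permutes V \<and> map \<tau> cs = cs}"
  then have t: "\<tau> permutes V" "\<forall>c\<in>set cs. \<tau> c = c" using map_fix_iff[of \<tau> cs] by auto
  then show "\<tau> \<in> {\<tau>. \<tau> permutes (V - set cs)}"
    unfolding permutes_def by auto
next
  fix \<tau> assume "\<tau> \<in> {\<tau>. \<tau> permutes (V - set cs)}"
  then have t: "\<tau> permutes (V - set cs)" by simp
  then have "\<tau> permutes V" by (rule permutes_subset) auto
  moreover have "\<forall>c\<in>set cs. \<tau> c = c" using t permutes_not_in by fastforce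
  ultimately show "\<tau> \<in> {\<tau>. \<tau> permutes V \<and> map \<tau> cs = cs}" using map_fix_iff by auto
qed

lemma count_perm:
  assumes "finite V" "length cs = length ds" "distinct cs" "distinct ds" "set cs \<subseteq> V" "set ds \<subseteq> V"
  shows "card {\<pi>. \<pi> permutes V \<and> map \<pi> cs = ds} = fact (card V - length cs)"
proof -
  obtain \<sigma> where s: "\<sigma> permutes V" "map \<sigma> cs = ds" using exists_perm[OF assms(2-6)] by blast
  have inj: "inj \<sigma>" using s(1) permutes_inj by blast
  have eq: "{\<pi>. \<pi> permutes V \<and> map \<pi> cs = ds} = (\<lambda>\<tau>. \<sigma> \<circ> \<tau>) ` {\<tau>. \<tau> permutes V \<and> map \<tau> cs = cs}"
  proof (intro set_eqI iffI)
    fix \<pi> assume "\<pi> \<in> {\<pi>. \<pi> permutes V \<and> map \<pi> cs = ds}"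
    then have p: "\<pi> permutes V" "map \<pi> cs = ds" by auto
    have "inv \<sigma> \<circ> \<pi> permutes V" using p(1) s(1) by (intro permutes_compose permutes_inv)
    moreover have "map (inv \<sigma> \<circ> \<pi>) cs = cs"
      using p(2) s(2) by (metis (no_types, lifting) map_map map_fix_iff inj inv_f_f map_eq_conv o_apply)
    moreover have "\<pi> = \<sigma> \<circ> (inv \<sigma> \<circ> \<pi>)"
      using s(1) by (simp add: fun_eq_iff permutes_inverses(1))
    ultimately show "\<pi> \<in> (\<lambda>\<tau>. \<sigma> \<circ> \<tau>) ` {\<tau>. \<tau> permutes V \<and> map \<tau> cs = cs}" by blast
  next
    fix \<pi> assume "\<pi> \<in> (\<lambda>\<tau>. \<sigma> \<circ> \<tau>) ` {\<tau>. \<tau> permutes V \<and> map \<tau> cs = cs}"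
    then obtain \<tau> where t: "\<pi> = \<sigma> \<circ> \<tau>" "\<tau> permutes V" "map \<tau> cs = cs" by auto
    then show "\<pi> \<in> {\<pi>. \<pi> permutes V \<and> map \<pi> cs = ds}"
      using s by (auto intro: permutes_compose simp flip: map_map)
  qed
  have "inj_on (\<lambda>\<tau>. \<sigma> \<circ> \<tau>) {\<tau>. \<tau> permutes V \<and> map \<tau> cs = cs}"
    using inj by (auto simp: inj_on_def fun_eq_iff dest: injD)
  then have "card {\<pi>. \<pi> permutes V \<and> map \<pi> cs = ds} = card {\<tau>. \<tau> permutes (V - set cs)}"
    unfolding eq fix_perm[OF assms(5)] by (simp add: card_image fix_perm[OF assms(5)])
  also have "\<dots> = fact (card (V - set cs))"
    using assms(1) by (intro card_permutations) auto
  also have "card (V - set cs) = card V - length cs"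
    using assms by (simp add: card_Diff_subset distinct_card)
  finally show ?thesis .
qed


lemma pair_map_iff:
  "length t = length ps \<Longrightarrow> (map (\<lambda>(u, v). (g u, g v)) t = ps \<longleftrightarrow>
     map g (map fst t) = map fst ps \<and> map g (map snd t) = map snd ps)"
  by (induction t ps rule: list_induct2) auto

lemma qs_eq_iff:
  assumes "\<pi> permutes V" "length ps = length t"
  shows "qs \<pi> t = ps \<longleftrightarrow> map \<pi> (flat ps) = flat t"
proof -
  have inv: "\<And>l l'. map (inv \<pi>) l = l' \<longleftrightarrow> map \<pi> l' = l"
  proof -
    fix l l' :: "'a list"
    show "map (inv \<pi>) l = l' \<longleftrightarrow> map \<pi> l' = l"
    proof
      assume "map (inv \<pi>) l = l'"
      then show "map \<pi> l' = l" using assms(1) by (auto simp: comp_def permutes_inverses(1))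
    next
      assume "map \<pi> l' = l"
      then show "map (inv \<pi>) l = l'" using assms(1) by (auto simp: comp_def permutes_inverses(2))
    qed
  qed
  have "qs \<pi> t = ps \<longleftrightarrow> map (inv \<pi>) (map fst t) = map fst ps \<and> map (inv \<pi>) (map snd t) = map snd ps"
    unfolding qs_def using pair_map_iff assms(2) by metis
  also have "\<dots> \<longleftrightarrow> map \<pi> (map fst ps) = map fst t \<and> map \<pi> (map snd ps) = map snd t"
    using inv by blast
  also have "\<dots> \<longleftrightarrow> map \<pi> (flat ps) = flat t"
    unfolding flat_def map_append using assms(2) by (subst append_eq_append_conv) auto
  finally show ?thesis .
qed

theorem lemma3p1:
  fixes V :: "'a set" and n k :: nat and w :: "'a set \<Rightarrow> real"
    and x y :: "nat \<Rightarrow> 'a"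
  assumes "finite V" and "card V = n"
    and "1 \<le> 2 * k" and "2 * k \<le> n"
    and "\<forall>j\<in>{1..k}. x j \<in> V \<and> y j \<in> V"
    and "inj_on x {1..k}" and "inj_on y {1..k}"
    and "\<forall>j\<in>{1..k}. \<forall>l\<in>{1..k}. x j \<noteq> y l"
    and "i \<le> k"
  shows "Wvec k V w i =
    (\<Sum>\<pi>\<in>{\<pi>. \<pi> permutes V}. \<bar>hinner k V (wperm w \<pi>) (phi_star n k x y i)\<bar>) / fact n"
proof -
  define C where "C = real ((n - 2 * i) choose (k - i))"
  define t where "t = tg x y i"
  define g where "g = (\<lambda>ps. \<bar>wtotal (k - i) (V - pset ps) (D ps w)\<bar> / C)"
  define P where "P = {\<pi>. \<pi> permutes V}"
  have gt: "good V t" unfolding t_def using good_tg[OF assms(5-9)] .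
  have lt: "length t = i" unfolding t_def tg_def by simp
  have finP: "finite P" unfolding P_def using assms(1) by (rule finite_permutations)
  have finS: "finite (Sq V i)" using assms(1) by (rule finite_Sq)
  have img: "(\<lambda>\<pi>. qs \<pi> t) ` P \<subseteq> Sq V i"
    unfolding P_def using qs_Sq[OF _ gt] lt by auto
  have step1: "\<And>\<pi>. \<pi> \<in> P \<Longrightarrow> \<bar>hinner k V (wperm w \<pi>) (phi_star n k x y i)\<bar> = g (qs \<pi> t)"
  proof -
    fix \<pi> assume "\<pi> \<in> P"
    then have p: "\<pi> permutes V" unfolding P_def by simp
    have q: "good V (qs \<pi> t)" "length (qs \<pi> t) = i"
      using qs_Sq[OF p gt] lt unfolding Sq_def by auto
    have "hinner k V (wperm w \<pi>) (phi_star n k x y i) = hinner k V (wperm w \<pi>) (phi x y i) / C"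
      unfolding hinner_def phi_star_def C_def by (simp add: sum_divide_distrib)
    also have "hinner k V (wperm w \<pi>) (phi x y i) = hinner k V w (\<lambda>B. phi x y i (\<pi> ` B))"
      by (rule hinner_perm[OF p])
    also have "(\<lambda>B. phi x y i (\<pi> ` B)) = Phi (qs \<pi> t)"
      unfolding t_def using phi_perm[OF permutes_bij[OF p]] by auto
    also have "hinner k V w (Phi (qs \<pi> t)) = wtotal (k - i) (V - pset (qs \<pi> t)) (D (qs \<pi> t) w)"
      using hinner_Phi[OF assms(1) q(1)] q(2) assms(9) by simp
    finally show "\<bar>hinner k V (wperm w \<pi>) (phi_star n k x y i)\<bar> = g (qs \<pi> t)"
      unfolding g_def C_def by simp
  qed
  have fib: "\<And>ps. ps \<in> Sq V i \<Longrightarrow> card {\<pi> \<in> P. qs \<pi> t = ps} = fact (n - 2 * i)"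
  proof -
    fix ps assume ps: "ps \<in> Sq V i"
    then have gp: "good V ps" "length ps = i" unfolding Sq_def by auto
    have "{\<pi> \<in> P. qs \<pi> t = ps} = {\<pi>. \<pi> permutes V \<and> map \<pi> (flat ps) = flat t}"
      unfolding P_def using qs_eq_iff[of _ V ps t] gp(2) lt by auto
    also have "card \<dots> = fact (card V - length (flat ps))"
      using gp gt assms(1) lt unfolding good_def by (intro count_perm) (auto simp: flat_def)
    finally show "card {\<pi> \<in> P. qs \<pi> t = ps} = fact (n - 2 * i)"
      using gp(2) assms(2) by (simp add: flat_def mult_2)
  qed
  have "(\<Sum>\<pi>\<in>P. g (qs \<pi> t)) = (\<Sum>ps\<in>Sq V i. \<Sum>\<pi>\<in>{\<pi> \<in> P. qs \<pi> t = ps}. g (qs \<pi> t))"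
    by (rule sum.group[OF finP finS img, symmetric])
  also have "\<dots> = (\<Sum>ps\<in>Sq V i. real (fact (n - 2 * i)) * g ps)"
    by (rule sum.cong[OF refl]) (simp add: fib)
  finally have s1: "(\<Sum>\<pi>\<in>P. g (qs \<pi> t)) = real (fact (n - 2 * i)) * (\<Sum>ps\<in>Sq V i. g ps)"
    by (simp add: sum_distrib_left)
  have "card P = (\<Sum>ps\<in>Sq V i. \<Sum>\<pi>\<in>{\<pi> \<in> P. qs \<pi> t = ps}. (1::nat))"
    using sum.group[OF finP finS img, of "\<lambda>_. 1::nat"] by simp
  also have "\<dots> = card (Sq V i) * fact (n - 2 * i)" using fib by simp
  finally have "fact n = cc n i * fact (n - 2 * i)"
    using card_permutations[OF assms(2,1)] card_Sq[OF assms(1)] assms(2) unfolding P_def by simp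
  then have cf: "(fact n :: real) = real (cc n i) * real (fact (n - 2 * i))"
    by (metis of_nat_fact of_nat_mult)
  have A: "Wvec k V w i * real (cc n i) = (\<Sum>ps\<in>Sq V i. g ps)"
    using lemmaA[OF assms(1,9), of w] assms(2) unfolding g_def C_def by simp
  have "(\<Sum>\<pi>\<in>P. \<bar>hinner k V (wperm w \<pi>) (phi_star n k x y i)\<bar>) = (\<Sum>\<pi>\<in>P. g (qs \<pi> t))"
    using step1 by (rule sum.cong[OF refl])
  also have "\<dots> = real (fact (n - 2 * i)) * (Wvec k V w i * real (cc n i))"
    using s1 A by simp
  finally have "(\<Sum>\<pi>\<in>P. \<bar>hinner k V (wperm w \<pi>) (phi_star n k x y i)\<bar>) = Wvec k V w i * fact n"
    using cf by (simp add: algebra_simps)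
  then show ?thesis unfolding P_def by simp
qed

end
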